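(* Let $G$ be a finite graph with maximum degree $\Delta$, with edges ordered $e_1,\ldots,e_m$, let $\gamma>1$ be real, $K=\lceil(2+\gamma)(\Delta-1)\rceil$, and run the Procedure described in the context. Then for each step $i$, the map which assigns to each input prefix $(F_j)_{j\le i}$ (for which steps $1,\ldots,i$ are performed) the output $((R_j)_{j\le i},\Phi_i)$ is injective.
   Context: Procedure. A partial edge-coloring assigns to some edges a color in $\{1,\ldots,K\}$; initially all edges are uncolored. The input is a vector $F$ with entries in $\{1,\ldots,\lceil\gamma(\Delta-1)\rceil\}$. Fix, for every edge $e$ and every $k\ge 3$, an enumeration (e.g. lexicographic) of the cycles of length $2k$ of $G$ containing $e$. At step $i=1,2,\ldots$: if no edge is uncolored, stop. Otherwise let $e_j=uv$ be the uncolored edge of smallest index. Let $S'$ be the set of colors appearing on edges $xy\neq uv$ such that (1) $x=u$ or $x=v$, or (2) edges $ux$ and $vy$ exist and have the same color; let $S=\{1,\ldots,K\}\setminus S'$. Color $e_j$ with the $F_i$-th smallest element of $S$. If this creates a cycle colored with only two colors (it has length $2k\ge 6$), choose one such cycle $C$ by a fixed deterministic rule, write it as $e_{i_1},e_{i_2},\ldots,e_{i_{2k}},e_{i_1}$ (consecutive edges) with $e_{i_1}=e_j$ and $i_2<i_{2k}$, uncolor all edges of $C$ except $e_{i_2}$ and $e_{i_3}$, and set $R_i=(k,\ell)$ where $\ell$ is the index of $C$ in the fixed enumeration of cycles of length $2k$ containing $e_j$. Otherwise $R_i$ is empty. $\Phi_i$ denotes the partial coloring after step $i$. *)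

theory Defs
  imports Complex_Main
begin

(* A finite simple graph is given by the list es = [e_1,...,e_m] of its edges
   (each edge a 2-element vertex set); list position t corresponds to e_(t+1).
   A partial edge-colouring is a map edges => nat option (None = uncoloured). *)

type_synonym 'a colouring = "'a set \<Rightarrow> nat option"

definition degree :: "'a set list \<Rightarrow> 'a \<Rightarrow> nat" where
  "degree es v = card {e \<in> set es. v \<in> e}"

definition maxdeg :: "'a set list \<Rightarrow> nat" where
  "maxdeg es = Max (insert 0 (degree es ` (\<Union> (set es))))"

definition is_cycle_len :: "'a set list \<Rightarrow> nat \<Rightarrow> 'a set set \<Rightarrow> bool" where
  "is_cycle_len es n C \<longleftrightarrow> n \<ge> 3 \<and> C \<subseteq> set es \<and>
     (\<exists>vs. length vs = n \<and> distinct vs \<and>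
        C = {{vs ! t, vs ! ((t + 1) mod n)} | t. t < n})"

definition cycles_through :: "'a set list \<Rightarrow> nat \<Rightarrow> 'a set \<Rightarrow> 'a set set set" where
  "cycles_through es k e = {C. is_cycle_len es (2 * k) C \<and> e \<in> C}"

definition bichrom :: "'a colouring \<Rightarrow> 'a set set \<Rightarrow> bool" where
  "bichrom \<Phi> C \<longleftrightarrow> (\<forall>f\<in>C. \<Phi> f \<noteq> None) \<and> card (\<Phi> ` C) \<le> 2"

definition forbidden :: "'a set list \<Rightarrow> 'a colouring \<Rightarrow> 'a set \<Rightarrow> nat set" where
  "forbidden es \<Phi> e = {c. \<exists>f\<in>set es. f \<noteq> e \<and> \<Phi> f = Some c \<and>
      (f \<inter> e \<noteq> {} \<or>
       (\<exists>u v x y. e = {u, v} \<and> f = {x, y} \<and> {u, x} \<in> set es \<and> {v, y} \<in> set es \<and>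
                  \<Phi> {u, x} \<noteq> None \<and> \<Phi> {u, x} = \<Phi> {v, y}))}"

definition avail :: "nat \<Rightarrow> 'a set list \<Rightarrow> 'a colouring \<Rightarrow> 'a set \<Rightarrow> nat set" where
  "avail K es \<Phi> e = {1..K} - forbidden es \<Phi> e"

definition nbrs :: "'a set set \<Rightarrow> 'a set \<Rightarrow> 'a set set" where
  "nbrs C f = {g \<in> C. g \<noteq> f \<and> g \<inter> f \<noteq> {}}"

(* One step of the Procedure (assuming some edge is uncoloured).
   idx e k C : index of C in the fixed enumeration of cycles of length 2k containing e.
   rule \<Phi>' B : the fixed deterministic rule picking one of the bichromatic cycles B. *)
definition proc_step ::
  "'a set list \<Rightarrow> nat \<Rightarrow> ('a set \<Rightarrow> nat \<Rightarrow> 'a set set \<Rightarrow> nat)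
   \<Rightarrow> ('a colouring \<Rightarrow> 'a set set set \<Rightarrow> 'a set set)
   \<Rightarrow> 'a colouring \<Rightarrow> nat \<Rightarrow> (nat \<times> nat) option \<times> 'a colouring" where
  "proc_step es K idx rule \<Phi> F =
    (let j = Min {t. t < length es \<and> \<Phi> (es ! t) = None};
         e = es ! j;
         c = sorted_list_of_set (avail K es \<Phi> e) ! (F - 1);
         \<Phi>' = \<Phi>(e := Some c);
         B = {C. (\<exists>n. is_cycle_len es n C) \<and> e \<in> C \<and> bichrom \<Phi>' C}
     in if B = {} then (None, \<Phi>')
        else (let C = rule \<Phi>' B;
                  k = card C div 2;
                  e2 = es ! Min {t. t < length es \<and> es ! t \<in> nbrs C e};
                  e3 = (THE g. g \<in> nbrs C e2 \<and> g \<noteq> e)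
              in (Some (k, idx e k C), (\<lambda>f. if f \<in> C - {e2, e3} then None else \<Phi>' f))))"

(* Run the procedure on the input prefix Fs from colouring \<Phi>; returns None if the
   procedure stops (all edges coloured) before all steps of Fs are performed,
   otherwise Some (list of R_j, final colouring). *)
fun proc_run ::
  "'a set list \<Rightarrow> nat \<Rightarrow> ('a set \<Rightarrow> nat \<Rightarrow> 'a set set \<Rightarrow> nat)
   \<Rightarrow> ('a colouring \<Rightarrow> 'a set set set \<Rightarrow> 'a set set)
   \<Rightarrow> 'a colouring \<Rightarrow> nat list \<Rightarrow> ((nat \<times> nat) option list \<times> 'a colouring) option" where
  "proc_run es K idx rule \<Phi> [] = Some ([], \<Phi>)"
| "proc_run es K idx rule \<Phi> (F # Fs) =
    (if (\<forall>t < length es. \<Phi> (es ! t) \<noteq> None) then None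
     else (case proc_step es K idx rule \<Phi> F of
             (r, \<Phi>') \<Rightarrow> map_option (\<lambda>(rs, \<Psi>). (r # rs, \<Psi>)) (proc_run es K idx rule \<Phi>' Fs)))"

end

theory Submission
  imports Defs
begin


lemma suc_mod: "t < n \<Longrightarrow> (t + 1) mod (n::nat) = (if t + 1 = n then 0 else t + 1)"
  by auto
lemma suc_mod2: "t < n \<Longrightarrow> Suc t mod (n::nat) = (if Suc t = n then 0 else Suc t)"
  by auto

definition proper :: "'a set list \<Rightarrow> 'a colouring \<Rightarrow> bool" where
  "proper es \<Phi> \<longleftrightarrow> (\<forall>f\<in>set es. \<forall>g\<in>set es. f \<noteq> g \<longrightarrow> f \<inter> g \<noteq> {} \<longrightarrow> \<Phi> f \<noteq> None \<longrightarrow> \<Phi> f \<noteq> \<Phi> g)"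

lemma properD: "proper es \<Phi> \<Longrightarrow> f \<in> set es \<Longrightarrow> g \<in> set es \<Longrightarrow> f \<noteq> g \<Longrightarrow> f \<inter> g \<noteq> {}
   \<Longrightarrow> \<Phi> f \<noteq> None \<Longrightarrow> \<Phi> f \<noteq> \<Phi> g"
  unfolding proper_def by blast

locale cyc =
  fixes vs :: "'a list" and n :: nat
  assumes n3: "n \<ge> 3" and len: "length vs = n" and dist: "distinct vs"
begin

definition E :: "nat \<Rightarrow> 'a set" where "E t = {vs ! t, vs ! ((t + 1) mod n)}"

lemma vs_eq: "s < n \<Longrightarrow> t < n \<Longrightarrow> vs ! s = vs ! t \<longleftrightarrow> s = t"
  using dist len by (simp add: nth_eq_iff_index_eq)

lemma sm_lt: "t < n \<Longrightarrow> (t+1) mod n < n" using n3 by simp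

lemma E_card: "t < n \<Longrightarrow> card (E t) = 2"
proof -
  assume t: "t < n"
  have "(t+1) mod n \<noteq> t" using t n3 by (simp add: suc_mod2)
  then have "vs ! t \<noteq> vs ! ((t+1) mod n)" using vs_eq t sm_lt by metis
  then show ?thesis by (simp add: E_def)
qed

lemma adj: assumes s: "s < n" and t: "t < n" and st: "s \<noteq> t" and i: "E s \<inter> E t \<noteq> {}"
  shows "t = (s+1) mod n \<or> s = (t+1) mod n"
proof -
  have a: "(s+1) mod n < n" "(t+1) mod n < n" using s t sm_lt by auto
  from i obtain x where "x \<in> E s" "x \<in> E t" by blast
  then have "(s = t \<or> s = (t+1) mod n \<or> (s+1) mod n = t \<or> (s+1) mod n = (t+1) mod n)"
    unfolding E_def using vs_eq s t a by auto
  then show ?thesis using st s t n3 by (auto simp: suc_mod2 split: if_splits)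
qed

lemma E_inj: assumes s: "s < n" and t: "t < n" and eq: "E s = E t" shows "s = t"
proof (rule ccontr)
  assume st: "s \<noteq> t"
  have a: "(s+1) mod n < n" "(t+1) mod n < n" using s t sm_lt by auto
  have "vs ! s \<in> E t" "vs ! ((s+1) mod n) \<in> E t" using eq by (auto simp: E_def)
  then have "(s = t \<or> s = (t+1) mod n) \<and> ((s+1) mod n = t \<or> (s+1) mod n = (t+1) mod n)"
    unfolding E_def using vs_eq s t a by auto
  then show False using st s t n3 by (auto simp: suc_mod2 split: if_splits)
qed

lemma E_next_ne: "t < n \<Longrightarrow> E t \<noteq> E ((t+1) mod n)"
proof
  assume t: "t < n" and "E t = E ((t+1) mod n)"
  then have "t = (t+1) mod n" using E_inj sm_lt by blast
  then show False using t n3 by (simp add: suc_mod2 split: if_splits)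
qed

lemma E_next_int: "E t \<inter> E ((t+1) mod n) \<noteq> {}"
  by (auto simp: E_def)

definition Cs where "Cs = E ` {..<n}"

lemma card_Cs: "card Cs = n"
  unfolding Cs_def by (subst card_image) (auto intro: inj_onI E_inj)

lemma Cs_eq: "{{vs ! t, vs ! ((t + 1) mod n)} | t. t < n} = Cs"
  unfolding Cs_def E_def by auto

lemma E_in: "t < n \<Longrightarrow> E t \<in> Cs" unfolding Cs_def by auto

lemma in_Cs: "g \<in> Cs \<Longrightarrow> \<exists>t<n. g = E t" unfolding Cs_def by auto

lemma finite_Cs: "finite Cs" unfolding Cs_def by auto

lemma three_vals:
  fixes \<Phi> :: "'a colouring"
  assumes b: "bichrom \<Phi> Cs" and x: "x \<in> \<Phi> ` Cs" and y: "y \<in> \<Phi> ` Cs" and z: "z \<in> \<Phi> ` Cs"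
    and xy: "x \<noteq> y" and yz: "y \<noteq> z" shows "x = z"
proof (rule ccontr)
  assume "x \<noteq> z"
  then have "card {x,y,z} = 3" using xy yz by auto
  moreover have "card {x,y,z} \<le> card (\<Phi> ` Cs)"
    using x y z finite_Cs by (intro card_mono) auto
  ultimately show False using b unfolding bichrom_def by auto
qed

lemma consec_ne:
  assumes p: "proper es \<Phi>" and sub: "Cs \<subseteq> set es" and b: "bichrom \<Phi> Cs" and t: "t < n"
  shows "\<Phi> (E t) \<noteq> \<Phi> (E ((t+1) mod n))"
proof -
  have i: "E t \<in> set es" "E ((t+1) mod n) \<in> set es" using sub E_in[OF t] E_in[OF sm_lt[OF t]] by auto
  have "\<Phi> (E t) \<noteq> None" using b E_in[OF t] unfolding bichrom_def by blast
  then show ?thesis by (rule properD[OF p i E_next_ne[OF t] E_next_int])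
qed

lemma alt:
  assumes p: "proper es \<Phi>" and sub: "Cs \<subseteq> set es" and b: "bichrom \<Phi> Cs" and t: "t < n"
  shows "\<Phi> (E ((t+2) mod n)) = \<Phi> (E t)"
proof -
  have e: "((t+1) mod n + 1) mod n = (t+2) mod n" by (simp add: mod_Suc_eq)
  have "\<Phi> (E t) = \<Phi> (E (((t+1) mod n + 1) mod n))"
    apply (rule three_vals[OF b, of _ "\<Phi> (E ((t+1) mod n))"])
    using E_in t sm_lt consec_ne[OF p sub b] by auto
  then show ?thesis using e by simp
qed

lemma even_n:
  assumes p: "proper es \<Phi>" and sub: "Cs \<subseteq> set es" and b: "bichrom \<Phi> Cs"
  shows "even n"
proof (rule ccontr)
  assume "odd n"
  then obtain d where d: "n = 2*d+1" by (metis oddE)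
  have I: "\<Phi> (E ((2*m) mod n)) = \<Phi> (E 0)" for m
  proof (induction m)
    case 0 then show ?case by simp
  next
    case (Suc m)
    have "(2 * Suc m) mod n = ((2*m) mod n + 2) mod n" using mod_add_left_eq[of "2*m" n 2] by simp
    then have "\<Phi> (E ((2 * Suc m) mod n)) = \<Phi> (E ((2*m) mod n))"
      using alt[OF p sub b, of "(2*m) mod n"] n3 by simp
    then show ?case using Suc by simp
  qed
  have "(2*d) mod n = n - 1" using d by simp
  then have "\<Phi> (E (n-1)) = \<Phi> (E 0)" using I[of d] by simp
  moreover have "((n-1)+1) mod n = 0" using n3 by simp
  ultimately show False using consec_ne[OF p sub b, of "n-1"] n3 by simp
qed

lemma agree:
  assumes p: "proper es \<Phi>" "proper es \<Psi>" and sub: "Cs \<subseteq> set es"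
    and b: "bichrom \<Phi> Cs" "bichrom \<Psi> Cs"
    and g: "g0 \<in> Cs" "g1 \<in> Cs" "\<Phi> g0 = \<Psi> g0" "\<Phi> g1 = \<Psi> g1" "\<Phi> g0 \<noteq> \<Phi> g1"
  shows "\<forall>g\<in>Cs. \<Phi> g = \<Psi> g"
proof -
  have palP: "\<Phi> h = \<Phi> g0 \<or> \<Phi> h = \<Phi> g1" if h: "h \<in> Cs" for h
  proof -
    have i: "\<Phi> h \<in> \<Phi> ` Cs" "\<Phi> g0 \<in> \<Phi> ` Cs" "\<Phi> g1 \<in> \<Phi> ` Cs" using h g(1,2) by blast+
    show ?thesis using three_vals[OF b(1) i(1) i(2) i(3)] g(5) by blast
  qed
  have palQ: "\<Psi> h = \<Phi> g0 \<or> \<Psi> h = \<Phi> g1" if h: "h \<in> Cs" for h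
  proof -
    have i: "\<Psi> h \<in> \<Psi> ` Cs" "\<Psi> g0 \<in> \<Psi> ` Cs" "\<Psi> g1 \<in> \<Psi> ` Cs" using h g(1,2) by blast+
    show ?thesis using three_vals[OF b(2) i(1) i(2) i(3)] g by metis
  qed
  obtain s where s: "s < n" "g0 = E s" using in_Cs g by blast
  have I: "\<Phi> (E ((s+d) mod n)) = \<Psi> (E ((s+d) mod n))" for d
  proof (induction d)
    case 0 then show ?case using s g by simp
  next
    case (Suc d)
    let ?t = "(s+d) mod n"
    have t: "?t < n" using n3 by simp
    have e: "(?t + 1) mod n = (s + Suc d) mod n" by (simp add: mod_Suc_eq)
    have "E ((s + Suc d) mod n) \<in> Cs" using E_in n3 by simp
    then show ?case
      using consec_ne[OF p(1) sub b(1) t] consec_ne[OF p(2) sub b(2) t] palP palQ E_in[OF t] Suc g(5) e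
      by metis
  qed
  show ?thesis
  proof
    fix g assume "g \<in> Cs"
    then obtain t where t: "t < n" "g = E t" using in_Cs by blast
    have "(s + (t + n - s)) mod n = t" using t s by simp
    then show "\<Phi> g = \<Psi> g" using I[of "t + n - s"] t by simp
  qed
qed


definition pr :: "nat \<Rightarrow> nat" where "pr s = (if s = 0 then n - 1 else s - 1)"

lemma pr_lt: "s < n \<Longrightarrow> pr s < n" using n3 by (auto simp: pr_def)

lemma pr_iff: "s < n \<Longrightarrow> p < n \<Longrightarrow> s = (p+1) mod n \<longleftrightarrow> p = pr s"
  using n3 by (auto simp: pr_def suc_mod2 split: if_splits)

lemma nbrs_E: "s < n \<Longrightarrow> g \<in> nbrs Cs (E s) \<longleftrightarrow> (\<exists>p<n. g = E p \<and> p \<noteq> s \<and> E p \<inter> E s \<noteq> {})"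
  unfolding nbrs_def Cs_def using E_inj by auto

lemma nbr_next: "t < n \<Longrightarrow> E ((t+1) mod n) \<in> nbrs Cs (E t)"
  unfolding nbrs_def using E_in sm_lt E_next_ne E_next_int by blast

lemma nbr_cases: assumes s: "s < n" and p: "p < n" and ps: "p \<noteq> s" and i: "E p \<inter> E s \<noteq> {}"
  shows "p = (s+1) mod n \<or> p = pr s"
  using adj[OF s p] ps i pr_iff[OF s p] by (metis inf_commute)

lemma pr_ne: "s < n \<Longrightarrow> pr s \<noteq> s" "s < n \<Longrightarrow> pr s \<noteq> (s+1) mod n"
  using n3 by (auto simp: pr_def suc_mod2)

lemma nbr_unique: assumes s: "s < n" and t: "t < n" and st: "s \<noteq> t" and i: "E s \<inter> E t \<noteq> {}"
  shows "\<exists>!g. g \<in> nbrs Cs (E s) \<and> g \<noteq> E t"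
proof -
  have tc: "t = (s+1) mod n \<or> t = pr s" using nbr_cases[OF s t] st i by (metis inf_commute)
  have prn: "E (pr s) \<inter> E s \<noteq> {}"
    using E_next_int[of "pr s"] pr_iff[OF s pr_lt[OF s]] by auto
  have sn: "E ((s+1) mod n) \<inter> E s \<noteq> {}" using E_next_int[of s] by auto
  have sne: "(s+1) mod n \<noteq> s" using s n3 by (simp add: suc_mod2)
  define w where "w = (if t = pr s then (s+1) mod n else pr s)"
  have w: "w < n" "w \<noteq> s" "w \<noteq> t" "E w \<inter> E s \<noteq> {}"
    using tc pr_lt[OF s] sm_lt pr_ne[OF s] sne prn sn by (auto simp: w_def)
  show ?thesis
  proof (rule ex1I[of _ "E w"])
    show "E w \<in> nbrs Cs (E s) \<and> E w \<noteq> E t"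
      using w nbrs_E[OF s] E_inj t by blast
  next
    fix g assume g: "g \<in> nbrs Cs (E s) \<and> g \<noteq> E t"
    then obtain p where p: "p < n" "g = E p" "p \<noteq> s" "E p \<inter> E s \<noteq> {}" using nbrs_E[OF s] by blast
    have "p \<noteq> t" using g p by auto
    then have "p = w" using nbr_cases[OF s p(1) p(3) p(4)] tc w_def by auto
    then show "g = E w" using p by simp
  qed
qed

lemma no4:
  fixes \<Phi> :: "'a colouring"
  assumes n4: "n = 4" and p: "proper es (\<Phi>(e := Some c))" and sub: "Cs \<subseteq> set es"
    and b: "bichrom (\<Phi>(e := Some c)) Cs" and eC: "e \<in> Cs" and Pe: "\<Phi> e = None"
    and cf: "c \<notin> forbidden es \<Phi> e"
  shows False
proof -
  let ?P = "\<Phi>(e := Some c)"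
  obtain t where t: "t < n" "e = E t" using in_Cs eC by blast
  define t1 where "t1 = (t+1) mod n"
  define t2 where "t2 = (t+2) mod n"
  define t3 where "t3 = (t+3) mod n"
  have lt: "t1 < n" "t2 < n" "t3 < n" using n3 by (auto simp: t1_def t2_def t3_def)
  have t4: "t < 4" using t n4 by simp
  have ne: "t1 \<noteq> t" "t2 \<noteq> t" "t3 \<noteq> t" using t4 unfolding t1_def t2_def t3_def n4 by presburger+
  have m: "(t1+2) mod n = t3" "(t3+1) mod n = t" "(t1+1) mod n = t2" "(t2 + 1) mod n = t3"
    using t4 unfolding t1_def t2_def t3_def n4 by presburger+
  have c1: "?P (E t2) = ?P (E t)" using alt[OF p sub b t(1)] by (simp add: t2_def)
  have c2: "?P (E t3) = ?P (E t1)" using alt[OF p sub b lt(1)] unfolding m(1) .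
  have Ene: "E t1 \<noteq> e" "E t2 \<noteq> e" "E t3 \<noteq> e" using E_inj lt t ne by metis+
  have col: "?P (E t1) \<noteq> None" using b E_in lt unfolding bichrom_def by auto
  have f: "E t2 = {vs ! t2, vs ! t3}" using m by (simp add: E_def)
  have ux: "E t1 = {vs ! t1, vs ! t2}" using m by (simp add: E_def)
  have vy: "{vs ! t, vs ! t3} = E t3" using m by (auto simp: E_def)
  have e: "e = {vs ! t1, vs ! t}" using t by (auto simp: E_def t1_def)
  have h1: "E t2 \<in> set es" "E t1 \<in> set es" "E t3 \<in> set es" using sub E_in lt by auto
  have h2: "\<Phi> (E t2) = Some c" using c1 Ene t by simp
  have h3: "\<Phi> (E t1) \<noteq> None" using col Ene by simp
  have h4: "\<Phi> (E t1) = \<Phi> (E t3)" using c2 Ene by simp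
  have ex: "\<exists>u v x y. e = {u, v} \<and> E t2 = {x, y} \<and> {u, x} \<in> set es \<and> {v, y} \<in> set es \<and>
                  \<Phi> {u, x} \<noteq> None \<and> \<Phi> {u, x} = \<Phi> {v, y}"
    apply (rule exI[of _ "vs ! t1"], rule exI[of _ "vs ! t"], rule exI[of _ "vs ! t2"], rule exI[of _ "vs ! t3"])
    unfolding ux[symmetric] vy by (intro conjI e f h1(2) h1(3) h3 h4)
  have "c \<in> forbidden es \<Phi> e"
    unfolding forbidden_def
    apply (rule CollectI, rule bexI[OF _ h1(1)])
    apply (intro conjI Ene(2) h2)
    apply (rule disjI2)
    by (rule ex)
  then show False using cf by simp
qed

end


lemma finite_verts: "\<forall>e\<in>set es. card e = 2 \<Longrightarrow> finite (\<Union> (set es))"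
  by (metis List.finite_set card.infinite finite_Union zero_neq_numeral)

lemma degree_le: "\<forall>e\<in>set es. card e = 2 \<Longrightarrow> w \<in> \<Union> (set es) \<Longrightarrow> degree es w \<le> maxdeg es"
  unfolding maxdeg_def using finite_verts by (intro Max_ge) auto

lemma card_A:
  fixes \<Phi> :: "'a colouring"
  assumes c2: "\<forall>e\<in>set es. card e = 2" and e: "e \<in> set es" and w: "w \<in> e"
  shows "card {c. \<exists>f\<in>set es. f \<noteq> e \<and> w \<in> f \<and> \<Phi> f = Some c} \<le> maxdeg es - 1"
proof -
  let ?S = "{f \<in> set es. w \<in> f}"
  have sb: "{c. \<exists>f\<in>set es. f \<noteq> e \<and> w \<in> f \<and> \<Phi> f = Some c} \<subseteq> (\<lambda>f. the (\<Phi> f)) ` (?S - {e})"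
    by (force)
  have "card {c. \<exists>f\<in>set es. f \<noteq> e \<and> w \<in> f \<and> \<Phi> f = Some c} \<le> card (?S - {e})"
    by (rule order_trans[OF card_mono[OF finite_imageI sb] card_image_le]) simp_all
  also have "\<dots> = degree es w - 1" unfolding degree_def using e w by simp
  also have "\<dots> \<le> maxdeg es - 1" using degree_le[OF c2, of w] e w by (meson UnionI diff_le_mono)
  finally show ?thesis .
qed

lemma forb_finite: "finite (forbidden es \<Phi> e)"
proof -
  have "forbidden es \<Phi> e \<subseteq> (\<lambda>f. the (\<Phi> f)) ` set es" unfolding forbidden_def by force
  then show ?thesis by (rule finite_subset) simp
qed

lemma forb_card:
  fixes \<Phi> :: "'a colouring"
  assumes c2: "\<forall>e\<in>set es. card e = 2" and p: "proper es \<Phi>"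
    and e: "e \<in> set es" and Pe: "\<Phi> e = None"
  shows "card (forbidden es \<Phi> e) \<le> 2 * (maxdeg es - 1)"
proof -
  obtain u v where uv: "e = {u,v}" "u \<noteq> v" using c2 e by (meson card_2_iff)
  define A where "A w = {c. \<exists>f\<in>set es. f \<noteq> e \<and> w \<in> f \<and> \<Phi> f = Some c}" for w
  have fA: "finite (A w)" for w
  proof -
    have "A w \<subseteq> (\<lambda>f. the (\<Phi> f)) ` set es" unfolding A_def by force
    then show ?thesis by (rule finite_subset) simp
  qed
  have cA: "card (A u) \<le> maxdeg es - 1" "card (A v) \<le> maxdeg es - 1"
    unfolding A_def using card_A[OF c2 e] uv by auto
  define D where "D = forbidden es \<Phi> e - (A u \<union> A v)"
  define r where "r c a \<longleftrightarrow> (\<exists>f\<in>set es. \<Phi> f = Some c \<and> f \<inter> e = {} \<and>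
       (\<exists>u' v' x y. e = {u', v'} \<and> f = {x, y} \<and> {u', x} \<in> set es \<and> {v', y} \<in> set es \<and>
                  \<Phi> {u', x} = Some a \<and> \<Phi> {u', x} = \<Phi> {v', y}))" for c a
  (* witnesses give colours in both A u and A v, and determine f *)
  have wit: "\<exists>pe qe. pe \<in> set es \<and> qe \<in> set es \<and> u \<in> pe \<and> v \<in> qe \<and> \<Phi> pe = Some a \<and> \<Phi> qe = Some a
      \<and> f = (pe - {u}) \<union> (qe - {v})"
    if f: "f \<inter> e = {}" and w: "e = {u', v'}" "f = {x, y}" "{u', x} \<in> set es" "{v', y} \<in> set es"
        "\<Phi> {u', x} = Some a" "\<Phi> {u', x} = \<Phi> {v', y}" for f u' v' x y a
  proof -
    have xy: "x \<noteq> u" "x \<noteq> v" "y \<noteq> u" "y \<noteq> v" using f w uv by auto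
    have "(u' = u \<and> v' = v) \<or> (u' = v \<and> v' = u)" using w(1) uv by (auto simp: doubleton_eq_iff)
    then show ?thesis
    proof
      assume "u' = u \<and> v' = v"
      moreover have "({u,x} - {u}) \<union> ({v,y} - {v}) = {x,y}" using xy by auto
      ultimately show ?thesis using w by (intro exI[of _ "{u,x}"] exI[of _ "{v,y}"]) simp
    next
      assume "u' = v \<and> v' = u"
      moreover have "({u,y} - {u}) \<union> ({v,x} - {v}) = {x,y}" using xy by auto
      ultimately show ?thesis using w by (intro exI[of _ "{u,y}"] exI[of _ "{v,x}"]) simp
    qed
  qed
  have uniq: "pe = pe'" if "pe \<in> set es" "pe' \<in> set es" "z \<in> pe" "z \<in> pe'" "\<Phi> pe = Some a" "\<Phi> pe' = Some a"
    for pe pe' z a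
  proof (rule ccontr)
    assume ne: "pe \<noteq> pe'"
    have "pe \<inter> pe' \<noteq> {}" using that(3,4) by blast
    then show False using properD[OF p that(1,2) ne] that(5,6) by simp
  qed
  have cD: "card D \<le> card (A u \<inter> A v)"
  proof (rule card_le_if_inj_on_rel[where r = r])
    show "finite (A u \<inter> A v)" using fA by simp
  next
    fix c assume c: "c \<in> D"
    then have "c \<in> forbidden es \<Phi> e" unfolding D_def by (rule DiffD1)
    then have "\<exists>f\<in>set es. f \<noteq> e \<and> \<Phi> f = Some c \<and> (f \<inter> e \<noteq> {} \<or> (\<exists>u v x y. e = {u, v} \<and> f = {x, y} \<and> {u, x} \<in> set es \<and> {v, y} \<in> set es \<and>
                  \<Phi> {u, x} \<noteq> None \<and> \<Phi> {u, x} = \<Phi> {v, y}))"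
      unfolding forbidden_def by (rule CollectD)
    then obtain f where f1: "f \<in> set es" and P: "f \<noteq> e \<and> \<Phi> f = Some c \<and> (f \<inter> e \<noteq> {} \<or> (\<exists>u v x y. e = {u, v} \<and> f = {x, y} \<and> {u, x} \<in> set es \<and> {v, y} \<in> set es \<and>
                  \<Phi> {u, x} \<noteq> None \<and> \<Phi> {u, x} = \<Phi> {v, y}))" ..
    have f: "f \<in> set es" "f \<noteq> e" "\<Phi> f = Some c" using f1 P by simp_all
    have cs: "f \<inter> e \<noteq> {} \<or> (\<exists>u v x y. e = {u, v} \<and> f = {x, y} \<and> {u, x} \<in> set es \<and> {v, y} \<in> set es \<and>
                  \<Phi> {u, x} \<noteq> None \<and> \<Phi> {u, x} = \<Phi> {v, y})" using P by (elim conjE)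
    have fe: "f \<inter> e = {}"
    proof (rule ccontr)
      assume "f \<inter> e \<noteq> {}"
      then have "u \<in> f \<or> v \<in> f" using uv by auto
      then have "c \<in> A u \<union> A v" unfolding A_def using f by blast
      then show False using c D_def by blast
    qed
    then obtain u' v' x y where w: "e = {u', v'}" "f = {x, y}" "{u', x} \<in> set es" "{v', y} \<in> set es"
      "\<Phi> {u', x} \<noteq> None" "\<Phi> {u', x} = \<Phi> {v', y}" using cs by blast
    then obtain a where a: "\<Phi> {u', x} = Some a" by blast
    obtain pe qe where pq: "pe \<in> set es" "qe \<in> set es" "u \<in> pe" "v \<in> qe" "\<Phi> pe = Some a" "\<Phi> qe = Some a"
      using wit[OF fe w(1-4) a w(6)] by blast
    have "pe \<noteq> e" "qe \<noteq> e" using pq Pe by auto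
    then have "a \<in> A u \<inter> A v" unfolding A_def using pq by blast
    moreover have "r c a" unfolding r_def using f fe w a by blast
    ultimately show "\<exists>a. a \<in> A u \<inter> A v \<and> r c a" by blast
  next
    fix c1 c2 a assume "c1 \<in> D" "c2 \<in> D" "a \<in> A u \<inter> A v" and r1: "r c1 a" and r2: "r c2 a"
    obtain f1 where f1: "f1 \<in> set es" "\<Phi> f1 = Some c1" and
      "\<exists>pe qe. pe \<in> set es \<and> qe \<in> set es \<and> u \<in> pe \<and> v \<in> qe \<and> \<Phi> pe = Some a \<and> \<Phi> qe = Some a
      \<and> f1 = (pe - {u}) \<union> (qe - {v})"
      using r1 unfolding r_def by (metis wit)
    then obtain p1 q1 where pq1: "p1 \<in> set es" "q1 \<in> set es" "u \<in> p1" "v \<in> q1" "\<Phi> p1 = Some a" "\<Phi> q1 = Some a"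
      "f1 = (p1 - {u}) \<union> (q1 - {v})" by blast
    obtain f2 where f2: "f2 \<in> set es" "\<Phi> f2 = Some c2" and
      "\<exists>pe qe. pe \<in> set es \<and> qe \<in> set es \<and> u \<in> pe \<and> v \<in> qe \<and> \<Phi> pe = Some a \<and> \<Phi> qe = Some a
      \<and> f2 = (pe - {u}) \<union> (qe - {v})"
      using r2 unfolding r_def by (metis wit)
    then obtain p2 q2 where pq2: "p2 \<in> set es" "q2 \<in> set es" "u \<in> p2" "v \<in> q2" "\<Phi> p2 = Some a" "\<Phi> q2 = Some a"
      "f2 = (p2 - {u}) \<union> (q2 - {v})" by blast
    have "p1 = p2" "q1 = q2" using uniq pq1 pq2 by metis+
    then have "f1 = f2" using pq1 pq2 by simp
    then show "c1 = c2" using f1 f2 by simp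
  qed
  have "forbidden es \<Phi> e \<subseteq> (A u \<union> A v) \<union> D" unfolding D_def by blast
  then have "card (forbidden es \<Phi> e) \<le> card (A u \<union> A v \<union> D)"
    by (rule card_mono[rotated]) (simp add: fA D_def forb_finite)
  also have "\<dots> \<le> card (A u \<union> A v) + card D" by (rule card_Un_le)
  also have "\<dots> \<le> card (A u \<union> A v) + card (A u \<inter> A v)" using cD by simp
  also have "\<dots> = card (A u) + card (A v)" using card_Un_Int[OF fA fA] by simp
  finally show ?thesis using cA by simp
qed



definition inv :: "'a set list \<Rightarrow> 'a colouring \<Rightarrow> bool" where
  "inv es \<Phi> \<longleftrightarrow> proper es \<Phi> \<and> (\<forall>f. \<Phi> f \<noteq> None \<longrightarrow> f \<in> set es)"

definition selE :: "'a set list \<Rightarrow> 'a colouring \<Rightarrow> 'a set" where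
  "selE es \<Phi> = es ! Min {t. t < length es \<and> \<Phi> (es ! t) = None}"
definition colr :: "nat \<Rightarrow> 'a set list \<Rightarrow> 'a colouring \<Rightarrow> nat \<Rightarrow> nat" where
  "colr K es \<Phi> F = sorted_list_of_set (avail K es \<Phi> (selE es \<Phi>)) ! (F - 1)"
definition Bset :: "'a set list \<Rightarrow> 'a colouring \<Rightarrow> 'a set \<Rightarrow> 'a set set set" where
  "Bset es \<Phi>' e = {C. (\<exists>n. is_cycle_len es n C) \<and> e \<in> C \<and> bichrom \<Phi>' C}"
definition e2f :: "'a set list \<Rightarrow> 'a set set \<Rightarrow> 'a set \<Rightarrow> 'a set" where
  "e2f es C e = es ! Min {t. t < length es \<and> es ! t \<in> nbrs C e}"
definition e3f :: "'a set set \<Rightarrow> 'a set \<Rightarrow> 'a set \<Rightarrow> 'a set" where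
  "e3f C e2 e = (THE g. g \<in> nbrs C e2 \<and> g \<noteq> e)"

lemma step_eq: "proc_step es K idx rule \<Phi> F =
  (let e = selE es \<Phi>; \<Phi>' = \<Phi>(e := Some (colr K es \<Phi> F)); B = Bset es \<Phi>' e in
   if B = {} then (None, \<Phi>')
   else (let C = rule \<Phi>' B; k = card C div 2 in
     (Some (k, idx e k C), \<lambda>f. if f \<in> C - {e2f es C e, e3f C (e2f es C e) e} then None else \<Phi>' f)))"
  unfolding proc_step_def selE_def colr_def Bset_def e2f_def e3f_def Let_def by simp

lemma selE_facts:
  assumes "\<not> (\<forall>t<length es. \<Phi> (es ! t) \<noteq> None)"
  shows "selE es \<Phi> \<in> set es" "\<Phi> (selE es \<Phi>) = None"
proof -
  let ?S = "{t. t < length es \<and> \<Phi> (es ! t) = None}"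
  have "?S \<noteq> {}" "finite ?S" using assms by auto
  then have "Min ?S \<in> ?S" by (rule Min_in[rotated])
  then show "selE es \<Phi> \<in> set es" "\<Phi> (selE es \<Phi>) = None" unfolding selE_def by auto
qed

lemma selE_cong: "(\<forall>f. \<Phi> f = None \<longleftrightarrow> \<Psi> f = None) \<Longrightarrow> selE es \<Phi> = selE es \<Psi>"
  unfolding selE_def by simp

lemma avail_big:
  assumes c2: "\<forall>e\<in>set es. card e = 2" and KN: "K \<ge> 2 * (maxdeg es - 1) + N"
    and p: "proper es \<Phi>" and e: "e \<in> set es" and Pe: "\<Phi> e = None"
  shows "N \<le> card (avail K es \<Phi> e)"
proof -
  have "card {1..K} - card (forbidden es \<Phi> e) \<le> card (avail K es \<Phi> e)"
    unfolding avail_def by (rule diff_card_le_card_Diff[OF forb_finite])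
  then show ?thesis using forb_card[OF c2 p e Pe] KN by simp
qed

lemma colr_facts:
  assumes "N \<le> card A" "F \<in> {1..N}"
  shows "sorted_list_of_set A ! (F - 1) \<in> A"
  using assms by (metis One_nat_def Suc_pred atLeastAtMost_iff card.infinite le_zero_eq
      less_eq_Suc_le not_one_le_zero nth_mem sorted_list_of_set.length_sorted_key_list_of_set
      sorted_list_of_set.set_sorted_key_list_of_set le_trans)

lemma colr_inj:
  assumes "N \<le> card A" "F \<in> {1..N}" "G \<in> {1..N}"
    and "sorted_list_of_set A ! (F - 1) = sorted_list_of_set A ! (G - 1)"
  shows "F = G"
proof -
  have "F - 1 < length (sorted_list_of_set A)" "G - 1 < length (sorted_list_of_set A)"
    using assms by auto
  then have "F - 1 = G - 1" using assms(4) nth_eq_iff_index_eq[OF sorted_list_of_set.distinct_sorted_key_list_of_set] by blast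
  then show ?thesis using assms by auto
qed

lemma proper_upd:
  assumes p: "proper es \<Phi>" and cf: "c \<notin> forbidden es \<Phi> e"
  shows "proper es (\<Phi>(e := Some c))"
  unfolding proper_def
proof (intro ballI impI)
  fix f g assume f: "f \<in> set es" "g \<in> set es" "f \<noteq> g" "f \<inter> g \<noteq> {}" "(\<Phi>(e := Some c)) f \<noteq> None"
  show "(\<Phi>(e := Some c)) f \<noteq> (\<Phi>(e := Some c)) g"
  proof (cases "f = e")
    case True
    then show ?thesis using f cf unfolding forbidden_def by (auto simp: Int_commute)
  next
    case False
    show ?thesis
    proof (cases "g = e")
      case True
      then show ?thesis using f cf False unfolding forbidden_def by auto
    next
      case False
      then show ?thesis using f p \<open>f \<noteq> e\<close> unfolding proper_def by auto
    qed
  qed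
qed

lemma proper_restr: "proper es \<Phi> \<Longrightarrow> proper es (\<lambda>f. if P f then None else \<Phi> f)"
  unfolding proper_def by auto

lemma B_cycle:
  assumes p: "proper es (\<Phi>(e := Some c))" and Pe: "\<Phi> e = None" and cf: "c \<notin> forbidden es \<Phi> e"
    and C: "C \<in> Bset es (\<Phi>(e := Some c)) e"
  shows "\<exists>vs n. cyc vs n \<and> C = cyc.Cs vs n \<and> C \<subseteq> set es \<and> even n \<and> n \<ge> 6 \<and> e \<in> C \<and> card C = n
      \<and> bichrom (\<Phi>(e := Some c)) C \<and> is_cycle_len es n C"
proof -
  obtain n vs where n: "n \<ge> 3" "C \<subseteq> set es" "length vs = n" "distinct vs"
      "C = {{vs ! t, vs ! ((t + 1) mod n)} | t. t < n}" and eC: "e \<in> C" and b: "bichrom (\<Phi>(e := Some c)) C"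
    using C unfolding Bset_def is_cycle_len_def by blast
  interpret cyc vs n using n by unfold_locales auto
  have CC: "C = Cs" using n Cs_eq by simp
  have ev: "even n" using even_n[OF p] n(2) b CC by simp
  have sub: "Cs \<subseteq> set es" using n(2) CC by simp
  have b': "bichrom (\<Phi>(e := Some c)) Cs" using b CC by simp
  have eC': "e \<in> Cs" using eC CC by simp
  have "n \<noteq> 4"
  proof
    assume "n = 4"
    then show False by (rule no4[OF _ p sub b' eC' Pe cf])
  qed
  then have n6: "n \<ge> 6" using ev n(1) by presburger
  have cardC: "card C = n" using card_Cs CC by simp
  have icl: "is_cycle_len es n C" unfolding is_cycle_len_def using n by blast
  show ?thesis by (rule exI[of _ vs], rule exI[of _ n]) (intro conjI cyc_axioms CC n(2) ev n6 eC cardC b icl)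
qed

lemma e23:
  assumes cy: "cyc vs n" and CC: "C = cyc.Cs vs n" and sub: "C \<subseteq> set es" and eC: "e \<in> C"
  shows "e2f es C e \<in> C" "e3f C (e2f es C e) e \<in> C" "e2f es C e \<noteq> e3f C (e2f es C e) e"
    "e2f es C e \<inter> e3f C (e2f es C e) e \<noteq> {}"
proof -
  interpret cyc vs n by (rule cy)
  obtain t where t: "t < n" "e = E t" using in_Cs eC CC by blast
  let ?S = "{t. t < length es \<and> es ! t \<in> nbrs C e}"
  have nn: "E ((t+1) mod n) \<in> nbrs C e" using nbr_next[OF t(1)] unfolding CC t(2) .
  then have "E ((t+1) mod n) \<in> set es" using sub unfolding nbrs_def by blast
  then obtain q where q: "q < length es" "es ! q = E ((t+1) mod n)" by (meson in_set_conv_nth)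
  then have "q \<in> ?S" using nn by simp
  then have "?S \<noteq> {}" by blast
  then have "Min ?S \<in> ?S" by (intro Min_in) auto
  then have "Min ?S < length es \<and> es ! Min ?S \<in> nbrs C e" by (rule CollectD)
  then have e2n: "e2f es C e \<in> nbrs C e" unfolding e2f_def by (rule conjunct2)
  have "e2f es C e \<in> nbrs Cs (E t)" using e2n unfolding CC t(2) .
  then obtain s where s: "s < n" "e2f es C e = E s" "s \<noteq> t" "E s \<inter> E t \<noteq> {}"
    using nbrs_E[OF t(1)] by blast
  have ex1: "\<exists>!g. g \<in> nbrs Cs (E s) \<and> g \<noteq> E t" using nbr_unique[OF s(1) t(1) s(3) s(4)] .
  have "e3f C (e2f es C e) e = (THE g. g \<in> nbrs Cs (E s) \<and> g \<noteq> E t)"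
    unfolding e3f_def s(2) unfolding CC t(2) ..
  then have e3: "e3f C (e2f es C e) e \<in> nbrs Cs (E s)" using theI'[OF ex1] by simp
  show "e2f es C e \<in> C" using e2n unfolding nbrs_def by blast
  show "e3f C (e2f es C e) e \<in> C" "e2f es C e \<noteq> e3f C (e2f es C e) e"
    "e2f es C e \<inter> e3f C (e2f es C e) e \<noteq> {}" using e3 unfolding nbrs_def s(2)[symmetric] CC[symmetric] by blast+
qed

lemma agreeC:
  assumes cy: "cyc vs n" and CC: "C = cyc.Cs vs n" and sub: "C \<subseteq> set es"
    and p: "proper es \<Phi>" "proper es \<Psi>" and b: "bichrom \<Phi> C" "bichrom \<Psi> C"
    and g: "g0 \<in> C" "g1 \<in> C" "g0 \<noteq> g1" "g0 \<inter> g1 \<noteq> {}" "\<Phi> g0 = \<Psi> g0" "\<Phi> g1 = \<Psi> g1"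
  shows "\<forall>g\<in>C. \<Phi> g = \<Psi> g"
proof -
  interpret cyc vs n by (rule cy)
  have "\<Phi> g0 \<noteq> None" using b(1) g(1) unfolding bichrom_def by blast
  then have "\<Phi> g0 \<noteq> \<Phi> g1" using properD[OF p(1), of g0 g1] g sub by blast
  then show ?thesis using agree[OF p sub[unfolded CC] b[unfolded CC]] g CC by blast
qed



lemma main:
  fixes es :: "'a set list" and idx :: "'a set \<Rightarrow> nat \<Rightarrow> 'a set set \<Rightarrow> nat"
    and rule :: "'a colouring \<Rightarrow> 'a set set set \<Rightarrow> 'a set set"
  assumes c2: "\<forall>e\<in>set es. card e = 2" and KN: "K \<ge> 2 * (maxdeg es - 1) + N"
    and idxb: "\<forall>e\<in>set es. \<forall>k\<ge>3. bij_betw (idx e k) (cycles_through es k e)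
                                 {1..card (cycles_through es k e)}"
    and ruleb: "\<forall>\<Phi> B. B \<noteq> {} \<longrightarrow> rule \<Phi> B \<in> B"
  shows "inv es \<Phi> \<Longrightarrow> inv es \<Psi> \<Longrightarrow> (\<forall>f. \<Phi> f = None \<longleftrightarrow> \<Psi> f = None) \<Longrightarrow>
    set Fs \<subseteq> {1..N} \<Longrightarrow> set Gs \<subseteq> {1..N} \<Longrightarrow>
    proc_run es K idx rule \<Phi> Fs = proc_run es K idx rule \<Psi> Gs \<Longrightarrow>
    proc_run es K idx rule \<Phi> Fs \<noteq> None \<Longrightarrow> \<Phi> = \<Psi> \<and> Fs = Gs"
proof (induction Fs arbitrary: \<Phi> \<Psi> Gs)
  case Nil
  then show ?case
    by (cases Gs) (auto split: if_splits prod.splits simp: map_option_case split: option.splits)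
next
  case (Cons F Fs)
  note IH = Cons.IH
  have nc: "\<not> (\<forall>t<length es. \<Phi> (es ! t) \<noteq> None)" using Cons.prems(7) by (auto split: if_splits)
  have ncQ: "\<not> (\<forall>t<length es. \<Psi> (es ! t) \<noteq> None)" using nc Cons.prems(3) by blast
  obtain r \<Phi>1 where st: "proc_step es K idx rule \<Phi> F = (r, \<Phi>1)" by fastforce
  have pr: "proc_run es K idx rule \<Phi> (F # Fs) = map_option (\<lambda>(rs, y). (r # rs, y)) (proc_run es K idx rule \<Phi>1 Fs)"
    unfolding proc_run.simps(2) if_not_P[OF nc] st by simp
  then have "proc_run es K idx rule \<Phi>1 Fs \<noteq> None" using Cons.prems(7) by auto
  then obtain rs \<Phi>f where run1: "proc_run es K idx rule \<Phi>1 Fs = Some (rs, \<Phi>f)"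
    by (metis not_None_eq surj_pair)
  have runF: "proc_run es K idx rule \<Phi> (F # Fs) = Some (r # rs, \<Phi>f)" using pr run1 by simp
  obtain G Gs' where Gs: "Gs = G # Gs'"
    using Cons.prems(6) runF by (cases Gs) auto
  obtain r' \<Psi>1 where stQ: "proc_step es K idx rule \<Psi> G = (r', \<Psi>1)" by fastforce
  have "proc_run es K idx rule \<Psi> (G # Gs') = Some (r # rs, \<Phi>f)" using Cons.prems(6) runF Gs by simp
  moreover have "proc_run es K idx rule \<Psi> (G # Gs') = map_option (\<lambda>(rs, y). (r' # rs, y)) (proc_run es K idx rule \<Psi>1 Gs')"
    unfolding proc_run.simps(2) if_not_P[OF ncQ] stQ by simp
  ultimately obtain rs' where run2: "proc_run es K idx rule \<Psi>1 Gs' = Some (rs', \<Phi>f)" and rr: "r' = r" "rs' = rs"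
    by (cases "proc_run es K idx rule \<Psi>1 Gs'") auto
  have runeq: "proc_run es K idx rule \<Phi>1 Fs = proc_run es K idx rule \<Psi>1 Gs'" using run1 run2 rr by simp
  have F: "F \<in> {1..N}" and G: "G \<in> {1..N}" using Cons.prems(4,5) Gs by auto
  have Fs: "set Fs \<subseteq> {1..N}" and Gs': "set Gs' \<subseteq> {1..N}" using Cons.prems(4,5) Gs by auto
  define e where "e = selE es \<Phi>"
  have eQ: "selE es \<Psi> = e" using selE_cong Cons.prems(3) e_def by metis
  have e: "e \<in> set es" "\<Phi> e = None" "\<Psi> e = None" using selE_facts[OF nc] selE_facts[OF ncQ] e_def eQ by auto
  have pP: "proper es \<Phi>" "proper es \<Psi>" using Cons.prems(1,2) inv_def by auto
  define c where "c = colr K es \<Phi> F"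
  define c' where "c' = colr K es \<Psi> G"
  have bigP: "N \<le> card (avail K es \<Phi> e)" using avail_big[OF c2 KN pP(1) e(1,2)] .
  have bigQ: "N \<le> card (avail K es \<Psi> e)" using avail_big[OF c2 KN pP(2) e(1,3)] .
  have cav: "c \<in> avail K es \<Phi> e" using colr_facts[OF bigP F] unfolding c_def colr_def e_def .
  have cav': "c' \<in> avail K es \<Psi> e" using colr_facts[OF bigQ G] unfolding c'_def colr_def eQ[symmetric] .
  have cf: "c \<notin> forbidden es \<Phi> e" "c' \<notin> forbidden es \<Psi> e" using cav cav' unfolding avail_def by auto
  define \<Phi>' where "\<Phi>' = \<Phi>(e := Some c)"
  define \<Psi>' where "\<Psi>' = \<Psi>(e := Some c')"
  have pP': "proper es \<Phi>'" "proper es \<Psi>'" using proper_upd[OF pP(1) cf(1)] proper_upd[OF pP(2) cf(2)]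
    unfolding \<Phi>'_def \<Psi>'_def by auto
  have iP': "\<forall>f. \<Phi>' f \<noteq> None \<longrightarrow> f \<in> set es" "\<forall>f. \<Psi>' f \<noteq> None \<longrightarrow> f \<in> set es"
    using Cons.prems(1,2) e(1) unfolding inv_def \<Phi>'_def \<Psi>'_def by auto
  have dom': "\<forall>f. \<Phi>' f = None \<longleftrightarrow> \<Psi>' f = None" using Cons.prems(3) unfolding \<Phi>'_def \<Psi>'_def by auto
  have stE: "proc_step es K idx rule \<Phi> F = (if Bset es \<Phi>' e = {} then (None, \<Phi>')
     else (let C = rule \<Phi>' (Bset es \<Phi>' e); k = card C div 2 in
     (Some (k, idx e k C), \<lambda>f. if f \<in> C - {e2f es C e, e3f C (e2f es C e) e} then None else \<Phi>' f)))"
    unfolding step_eq \<Phi>'_def c_def e_def Let_def by simp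
  have stEQ: "proc_step es K idx rule \<Psi> G = (if Bset es \<Psi>' e = {} then (None, \<Psi>')
     else (let C = rule \<Psi>' (Bset es \<Psi>' e); k = card C div 2 in
     (Some (k, idx e k C), \<lambda>f. if f \<in> C - {e2f es C e, e3f C (e2f es C e) e} then None else \<Psi>' f)))"
    unfolding step_eq \<Psi>'_def c'_def eQ Let_def by simp
  have fin: "\<Phi>' = \<Psi>' \<Longrightarrow> Fs = Gs' \<Longrightarrow> \<Phi> = \<Psi> \<and> F # Fs = Gs"
  proof -
    assume eq: "\<Phi>' = \<Psi>'" and fg: "Fs = Gs'"
    have "\<Phi> = \<Psi>"
    proof
      fix f show "\<Phi> f = \<Psi> f"
        using fun_cong[OF eq, of f] e unfolding \<Phi>'_def \<Psi>'_def by (cases "f = e") auto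
    qed
    moreover have "c = c'" using fun_cong[OF eq, of e] unfolding \<Phi>'_def \<Psi>'_def by simp
    then have "F = G" using colr_inj[OF bigP F G] \<open>\<Phi> = \<Psi>\<close> unfolding c_def c'_def colr_def e_def by simp
    ultimately show ?thesis using fg Gs by simp
  qed
  show ?case
  proof (cases "Bset es \<Phi>' e = {}")
    case True
    then have r: "r = None" "\<Phi>1 = \<Phi>'" using st stE by auto
    have BQ: "Bset es \<Psi>' e = {}" using stQ stEQ rr r by (auto simp: Let_def split: if_splits)
    then have "\<Psi>1 = \<Psi>'" using stQ stEQ by auto
    then have "\<Phi>' = \<Psi>' \<and> Fs = Gs'"
      using IH[of \<Phi>' \<Psi>' Gs'] pP' iP' dom' Fs Gs' runeq r run1 unfolding inv_def by auto
    then show ?thesis using fin by blast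
  next
    case False
    define C where "C = rule \<Phi>' (Bset es \<Phi>' e)"
    have CB: "C \<in> Bset es \<Phi>' e" using ruleb False C_def by blast
    obtain vs n where cy: "cyc vs n" "C = cyc.Cs vs n" "C \<subseteq> set es" "even n" "n \<ge> 6" "e \<in> C" "card C = n"
        "bichrom \<Phi>' C" "is_cycle_len es n C"
      using B_cycle[OF pP'(1)[unfolded \<Phi>'_def] e(2) cf(1) CB[unfolded \<Phi>'_def]] unfolding \<Phi>'_def by blast
    define k where "k = card C div 2"
    have n2k: "2 * k = n" using cy(4,7) unfolding k_def by simp
    have k3: "k \<ge> 3" using cy(5) n2k by simp
    have kC: "C \<in> cycles_through es k e" unfolding cycles_through_def using cy(9) cy(6) n2k by simp
    have r: "r = Some (k, idx e k C)"
      "\<Phi>1 = (\<lambda>f. if f \<in> C - {e2f es C e, e3f C (e2f es C e) e} then None else \<Phi>' f)"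
      using st stE False unfolding C_def k_def Let_def by auto
    have BQ: "Bset es \<Psi>' e \<noteq> {}" using stQ stEQ rr r by (auto split: if_splits)
    define D where "D = rule \<Psi>' (Bset es \<Psi>' e)"
    have DB: "D \<in> Bset es \<Psi>' e" using ruleb BQ D_def by blast
    obtain vs' n' where cy': "cyc vs' n'" "D = cyc.Cs vs' n'" "D \<subseteq> set es" "even n'" "n' \<ge> 6" "e \<in> D" "card D = n'"
        "bichrom \<Psi>' D" "is_cycle_len es n' D"
      using B_cycle[OF pP'(2)[unfolded \<Psi>'_def] e(3) cf(2) DB[unfolded \<Psi>'_def]] unfolding \<Psi>'_def by blast
    have r': "r' = Some (card D div 2, idx e (card D div 2) D)"
      "\<Psi>1 = (\<lambda>f. if f \<in> D - {e2f es D e, e3f D (e2f es D e) e} then None else \<Psi>' f)"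
      using stQ stEQ BQ unfolding D_def Let_def by auto
    have kD: "card D div 2 = k" and ixe: "idx e k D = idx e k C" using r r' rr by auto
    have "2 * k = n'" using cy'(4,7) kD by auto
    then have kD': "D \<in> cycles_through es k e" unfolding cycles_through_def using cy'(9) cy'(6) by simp
    have "inj_on (idx e k) (cycles_through es k e)" using idxb e(1) k3 bij_betw_imp_inj_on by blast
    then have CD: "D = C" using kC kD' ixe inj_onD by metis
    let ?e2 = "e2f es C e" let ?e3 = "e3f C (e2f es C e) e"
    have r1: "\<Psi>1 = (\<lambda>f. if f \<in> C - {?e2, ?e3} then None else \<Psi>' f)" using r' CD by simp
    have inv1: "inv es \<Phi>1" "inv es \<Psi>1" using r(2) r1 pP' iP' proper_restr unfolding inv_def by auto
    have dom1: "\<forall>f. \<Phi>1 f = None \<longleftrightarrow> \<Psi>1 f = None" using r(2) r1 dom' by auto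
    have "\<Phi>1 = \<Psi>1 \<and> Fs = Gs'" using IH[OF inv1 dom1 Fs Gs' runeq] run1 by simp
    then have out: "\<forall>f. f \<notin> C - {?e2, ?e3} \<longrightarrow> \<Phi>' f = \<Psi>' f" and fg: "Fs = Gs'"
      using r(2) r1 by (metis)+
    have E23: "?e2 \<in> C" "?e3 \<in> C" "?e2 \<noteq> ?e3" "?e2 \<inter> ?e3 \<noteq> {}" using e23[OF cy(1,2,3,6)] by auto
    have "\<forall>g\<in>C. \<Phi>' g = \<Psi>' g"
      using agreeC[OF cy(1,2,3) pP' cy(8)] cy'(8) CD E23 out by blast
    then have "\<Phi>' = \<Psi>'" using out by blast
    then show ?thesis using fin fg by blast
  qed
qed



lemma KN_arith:
  fixes \<gamma> :: real and \<Delta> :: nat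
  assumes g: "\<gamma> > 1"
  shows "nat \<lceil>(2 + \<gamma>) * (real \<Delta> - 1)\<rceil> \<ge> 2 * (\<Delta> - 1) + nat \<lceil>\<gamma> * (real \<Delta> - 1)\<rceil>"
proof (cases "\<Delta> = 0")
  case True
  have "\<lceil>\<gamma> * (real \<Delta> - 1)\<rceil> \<le> 0" using True g by (simp add: ceiling_le_iff)
  then show ?thesis using True by simp
next
  case False
  define m where "m = real (\<Delta> - 1)"
  have m: "real \<Delta> - 1 = m" "m \<ge> 0" using False by (auto simp: m_def of_nat_diff)
  have h: "(2 + \<gamma>) * m = \<gamma> * m + of_int (int (2 * (\<Delta> - 1)))" by (simp add: m_def algebra_simps)
  have cc: "\<lceil>(2 + \<gamma>) * m\<rceil> = \<lceil>\<gamma> * m\<rceil> + int (2 * (\<Delta> - 1))" unfolding h by (rule ceiling_add_of_int)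
  have "\<gamma> * m \<ge> 0" using m(2) g by (intro mult_nonneg_nonneg) auto
  then have c0: "\<lceil>\<gamma> * m\<rceil> \<ge> 0" by simp
  have "nat \<lceil>(2 + \<gamma>) * (real \<Delta> - 1)\<rceil> = nat \<lceil>\<gamma> * m\<rceil> + 2 * (\<Delta> - 1)"
    unfolding m(1) cc using c0 by (simp add: nat_add_distrib)
  then show ?thesis unfolding m(1) by simp
qed

theorem lemma2:
  fixes es :: "'a set list" and \<gamma> :: real and \<Delta> K i :: nat
    and idx :: "'a set \<Rightarrow> nat \<Rightarrow> 'a set set \<Rightarrow> nat"
    and rule :: "'a colouring \<Rightarrow> 'a set set set \<Rightarrow> 'a set set"
  assumes "distinct es" and "\<forall>e\<in>set es. card e = 2"
    and "\<Delta> = maxdeg es"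
    and "\<gamma> > 1"
    and "K = nat \<lceil>(2 + \<gamma>) * (real \<Delta> - 1)\<rceil>"
    and "\<forall>e\<in>set es. \<forall>k\<ge>3. bij_betw (idx e k) (cycles_through es k e)
                                 {1..card (cycles_through es k e)}"
    and "\<forall>\<Phi> B. B \<noteq> {} \<longrightarrow> rule \<Phi> B \<in> B"
  shows "inj_on (proc_run es K idx rule (\<lambda>_. None))
           {Fs. length Fs = i \<and> set Fs \<subseteq> {1..nat \<lceil>\<gamma> * (real \<Delta> - 1)\<rceil>}
                \<and> proc_run es K idx rule (\<lambda>_. None) Fs \<noteq> None}"
proof (rule inj_onI)
  fix Fs Gs
  assume F: "Fs \<in> {Fs. length Fs = i \<and> set Fs \<subseteq> {1..nat \<lceil>\<gamma> * (real \<Delta> - 1)\<rceil>}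
                \<and> proc_run es K idx rule (\<lambda>_. None) Fs \<noteq> None}"
    and G: "Gs \<in> {Fs. length Fs = i \<and> set Fs \<subseteq> {1..nat \<lceil>\<gamma> * (real \<Delta> - 1)\<rceil>}
                \<and> proc_run es K idx rule (\<lambda>_. None) Fs \<noteq> None}"
    and eq: "proc_run es K idx rule (\<lambda>_. None) Fs = proc_run es K idx rule (\<lambda>_. None) Gs"
  have KN: "K \<ge> 2 * (maxdeg es - 1) + nat \<lceil>\<gamma> * (real \<Delta> - 1)\<rceil>"
    using KN_arith[OF assms(4), of \<Delta>] assms(3,5) by simp
  have i0: "inv es (\<lambda>_. None)" unfolding inv_def proper_def by simp
  show "Fs = Gs"
    using main[OF assms(2) KN assms(6,7) i0 i0] F G eq by auto
qed


end
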